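(* Let $G$ be a connected graph of order $n(G)\ge 2$. The following statements are equivalent. (i) $\mu_t(G)=n(G)-\operatorname{diam}(G)+1$. (ii) There exists a diametral path $x_0,x_1,\dots,x_k$ in $G$ (that is, a shortest path with $k=\operatorname{diam}(G)$) such that for every pair $u,v$ of vertices of $G$ there exists a shortest $u,v$-path $u=y_0,y_1,\dots,y_{k'}=v$ with $\{y_1,\dots,y_{k'-1}\}\subseteq\{x_1,\dots,x_{k-1}\}$.
   Context: All graphs are finite, simple and undirected; $n(G)$ denotes the order of $G$ and $\operatorname{diam}(G)$ its diameter. Let $G$ be a connected graph and $X\subseteq V(G)$. Two vertices $x,y\in V(G)$ are $X$-visible if there exists a shortest $x,y$-path in $G$ none of whose internal vertices (i.e., vertices other than $x$ and $y$) belongs to $X$. The set $X$ is a total mutual-visibility set of $G$ if every two vertices of $G$ are $X$-visible (the empty set is allowed). The total mutual-visibility number $\mu_t(G)$ is the maximum cardinality of a total mutual-visibility set of $G$. *)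

theory Defs
  imports Main
begin

definition simple_graph :: "'a set \<Rightarrow> ('a \<Rightarrow> 'a \<Rightarrow> bool) \<Rightarrow> bool" where
  "simple_graph V E \<longleftrightarrow> finite V \<and> (\<forall>x y. E x y \<longrightarrow> x \<in> V \<and> y \<in> V)
     \<and> (\<forall>x y. E x y \<longrightarrow> E y x) \<and> (\<forall>x. \<not> E x x)"

definition walk :: "'a set \<Rightarrow> ('a \<Rightarrow> 'a \<Rightarrow> bool) \<Rightarrow> 'a list \<Rightarrow> bool" where
  "walk V E xs \<longleftrightarrow> xs \<noteq> [] \<and> set xs \<subseteq> V \<and>
     (\<forall>i. Suc i < length xs \<longrightarrow> E (xs ! i) (xs ! Suc i))"

definition walk_betw :: "'a set \<Rightarrow> ('a \<Rightarrow> 'a \<Rightarrow> bool) \<Rightarrow> 'a \<Rightarrow> 'a list \<Rightarrow> 'a \<Rightarrow> bool" where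
  "walk_betw V E u xs v \<longleftrightarrow> walk V E xs \<and> hd xs = u \<and> last xs = v"

definition connected_graph :: "'a set \<Rightarrow> ('a \<Rightarrow> 'a \<Rightarrow> bool) \<Rightarrow> bool" where
  "connected_graph V E \<longleftrightarrow> simple_graph V E \<and> V \<noteq> {} \<and>
     (\<forall>u\<in>V. \<forall>v\<in>V. \<exists>xs. walk_betw V E u xs v)"

definition gdist :: "'a set \<Rightarrow> ('a \<Rightarrow> 'a \<Rightarrow> bool) \<Rightarrow> 'a \<Rightarrow> 'a \<Rightarrow> nat" where
  "gdist V E u v = (LEAST n. \<exists>xs. walk_betw V E u xs v \<and> length xs = Suc n)"

definition shortest_path :: "'a set \<Rightarrow> ('a \<Rightarrow> 'a \<Rightarrow> bool) \<Rightarrow> 'a \<Rightarrow> 'a list \<Rightarrow> 'a \<Rightarrow> bool" where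
  "shortest_path V E u xs v \<longleftrightarrow> walk_betw V E u xs v \<and> length xs = Suc (gdist V E u v)"

definition diam :: "'a set \<Rightarrow> ('a \<Rightarrow> 'a \<Rightarrow> bool) \<Rightarrow> nat" where
  "diam V E = Max {gdist V E u v | u v. u \<in> V \<and> v \<in> V}"

definition internal :: "'a list \<Rightarrow> 'a set" where
  "internal xs = set (butlast (tl xs))"

definition X_visible :: "'a set \<Rightarrow> ('a \<Rightarrow> 'a \<Rightarrow> bool) \<Rightarrow> 'a set \<Rightarrow> 'a \<Rightarrow> 'a \<Rightarrow> bool" where
  "X_visible V E X x y \<longleftrightarrow> (\<exists>xs. shortest_path V E x xs y \<and> internal xs \<inter> X = {})"

definition total_mutual_visibility_set :: "'a set \<Rightarrow> ('a \<Rightarrow> 'a \<Rightarrow> bool) \<Rightarrow> 'a set \<Rightarrow> bool" where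
  "total_mutual_visibility_set V E X \<longleftrightarrow> X \<subseteq> V \<and> (\<forall>x\<in>V. \<forall>y\<in>V. X_visible V E X x y)"

definition mu_t :: "'a set \<Rightarrow> ('a \<Rightarrow> 'a \<Rightarrow> bool) \<Rightarrow> nat" where
  "mu_t V E = Max {card X | X. total_mutual_visibility_set V E X}"

end

theory Submission
  imports Defs
begin

lemma sp_exists:
  assumes "connected_graph V E" "u \<in> V" "v \<in> V"
  shows "\<exists>xs. shortest_path V E u xs v"
proof -
  obtain xs where w: "walk_betw V E u xs v" using assms unfolding connected_graph_def by blast
  then have ne: "xs \<noteq> []" by (simp add: walk_betw_def walk_def)
  then have "\<exists>n xs. walk_betw V E u xs v \<and> length xs = Suc n"
    by (intro exI[of _ "length xs - 1"] exI[of _ xs]) (use w ne in auto)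
  then have "\<exists>xs. walk_betw V E u xs v \<and> length xs = Suc (gdist V E u v)"
    unfolding gdist_def by (rule LeastI_ex)
  then show ?thesis unfolding shortest_path_def by blast
qed

lemma gdist_le:
  assumes "walk_betw V E u xs v"
  shows "Suc (gdist V E u v) \<le> length xs"
proof -
  have "xs \<noteq> []" using assms by (simp add: walk_betw_def walk_def)
  then obtain n where n: "length xs = Suc n" by (cases xs) auto
  have "gdist V E u v \<le> n" unfolding gdist_def
    by (rule Least_le) (use assms n in blast)
  then show ?thesis using n by simp
qed

lemma shortcut:
  assumes w: "walk_betw V E u xs v" and ij: "i < j" "j < length xs" and eq: "xs ! i = xs ! j"
  shows "walk_betw V E u (take i xs @ drop j xs) v"
proof -
  let ?ys = "take i xs @ drop j xs"
  have len: "length ?ys = i + (length xs - j)" using ij by simp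
  have nth: "\<And>m. m < length ?ys \<Longrightarrow> ?ys ! m = (if m < i then xs ! m else xs ! (m - i + j))"
    using ij by (auto simp: nth_append add.commute)
  have ed: "\<And>k. Suc k < length xs \<Longrightarrow> E (xs ! k) (xs ! Suc k)"
    using w by (simp add: walk_betw_def walk_def)
  have "?ys \<noteq> []" using ij by simp
  moreover have "set ?ys \<subseteq> V" using w unfolding walk_betw_def walk_def
    by (auto dest: in_set_takeD in_set_dropD)
  moreover have "\<forall>m. Suc m < length ?ys \<longrightarrow> E (?ys ! m) (?ys ! Suc m)"
  proof (intro allI impI)
    fix m assume m: "Suc m < length ?ys"
    show "E (?ys ! m) (?ys ! Suc m)"
    proof (cases "Suc m < i")
      case True then show ?thesis using nth[of m] nth[of "Suc m"] m ed[of m] ij by auto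
    next
      case False
      show ?thesis
      proof (cases "Suc m = i")
        case True
        then have "?ys ! m = xs ! m" "?ys ! Suc m = xs ! j" using nth[of m] nth[of "Suc m"] m by auto
        then show ?thesis using ed[of m] True eq ij by auto
      next
        case False2: False
        then have "m \<ge> i" using False by simp
        then have "?ys ! m = xs ! (m - i + j)" "?ys ! Suc m = xs ! Suc (m - i + j)"
          using nth[of m] nth[of "Suc m"] m by (auto simp: Suc_diff_le)
        moreover have "Suc (m - i + j) < length xs" using m len \<open>m \<ge> i\<close> by linarith
        ultimately show ?thesis using ed by auto
      qed
    qed
  qed
  moreover have "hd ?ys = u"
  proof (cases i)
    case 0
    then have "hd ?ys = xs ! j" using ij by (simp add: hd_drop_conv_nth)
    also have "\<dots> = xs ! 0" using eq 0 by simp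
    also have "\<dots> = u" using w ij by (cases xs) (auto simp: walk_betw_def)
    finally show ?thesis .
  next
    case (Suc k)
    then have "hd ?ys = hd xs" using ij by (cases xs) auto
    then show ?thesis using w by (simp add: walk_betw_def)
  qed
  moreover have "last ?ys = v" using w ij by (simp add: walk_betw_def)
  ultimately show ?thesis unfolding walk_betw_def walk_def by blast
qed

lemma sp_distinct:
  assumes "shortest_path V E u xs v"
  shows "distinct xs"
proof (rule ccontr)
  assume "\<not> distinct xs"
  then obtain i j where ij: "i < j" "j < length xs" "xs ! i = xs ! j"
    by (metis distinct_conv_nth linorder_neqE_nat)
  have w: "walk_betw V E u xs v" using assms by (simp add: shortest_path_def)
  have "Suc (gdist V E u v) \<le> length (take i xs @ drop j xs)"
    by (rule gdist_le[OF shortcut[OF w ij]])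
  moreover have "length (take i xs @ drop j xs) < length xs" using ij by simp
  ultimately show False using assms by (simp add: shortest_path_def)
qed

lemma card_internal:
  assumes "distinct xs"
  shows "card (internal xs) = length xs - 2"
  using assms unfolding internal_def
  by (simp add: distinct_card distinct_butlast distinct_tl)

lemma internal_sub: "internal xs \<subseteq> set xs"
  unfolding internal_def
  by (cases xs) (auto dest: in_set_butlastD)

theorem proposition2p2:
  fixes V :: "'a set" and E :: "'a \<Rightarrow> 'a \<Rightarrow> bool"
  assumes "connected_graph V E"
    and "card V \<ge> 2"
  shows "mu_t V E = card V - diam V E + 1 \<longleftrightarrow>
    (\<exists>xs. shortest_path V E (hd xs) xs (last xs) \<and> length xs = Suc (diam V E) \<and>
       (\<forall>u\<in>V. \<forall>v\<in>V. \<exists>ys. shortest_path V E u ys v \<and> internal ys \<subseteq> internal xs))"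
proof -
  have cg: "connected_graph V E" by fact
  have finV: "finite V" using cg by (simp add: connected_graph_def simple_graph_def)
  define k where "k = diam V E"
  define D where "D = {gdist V E u v | u v. u \<in> V \<and> v \<in> V}"
  have "D = (\<lambda>(u,v). gdist V E u v) ` (V \<times> V)" unfolding D_def by auto
  then have Dfin: "finite D" using finV by simp
  obtain a b where ab: "a \<in> V" "b \<in> V" "a \<noteq> b"
  proof -
    have "\<not> card V \<le> Suc 0" using assms(2) by simp
    then show ?thesis using card_le_Suc0_iff_eq[OF finV] that by blast
  qed
  have Dne: "D \<noteq> {}" unfolding D_def using ab by blast
  have kD: "k \<in> D" unfolding k_def diam_def D_def[symmetric] using Max_in[OF Dfin Dne] .
  then obtain p q where pq: "p \<in> V" "q \<in> V" "gdist V E p q = k" unfolding D_def by blast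
  have kmax: "\<And>u v. u \<in> V \<Longrightarrow> v \<in> V \<Longrightarrow> gdist V E u v \<le> k"
  proof -
    fix u v assume "u \<in> V" "v \<in> V"
    then have "gdist V E u v \<in> D" unfolding D_def by blast
    then show "gdist V E u v \<le> k" unfolding k_def diam_def D_def[symmetric] by (rule Max_ge[OF Dfin])
  qed
  have sp_set: "\<And>u xs v. shortest_path V E u xs v \<Longrightarrow> set xs \<subseteq> V"
    by (simp add: shortest_path_def walk_betw_def walk_def)
  have k1: "k \<ge> 1"
  proof -
    obtain zs where zs: "shortest_path V E a zs b" using sp_exists[OF cg ab(1,2)] by blast
    have "gdist V E a b \<noteq> 0"
    proof
      assume "gdist V E a b = 0"
      then have "length zs = 1" using zs by (simp add: shortest_path_def)
      then have "hd zs = last zs" by (cases zs) auto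
      then show False using zs ab unfolding shortest_path_def walk_betw_def by blast
    qed
    then show ?thesis using kmax[OF ab(1,2)] by simp
  qed
  have sp_k: "card (internal xs) = k - 1 \<and> Suc k \<le> card V \<and> internal xs \<subseteq> V"
    if "shortest_path V E u xs v" "length xs = Suc k" for u xs v
  proof -
    have d: "distinct xs" using sp_distinct that(1) .
    have "card (set xs) = Suc k" using d that(2) by (simp add: distinct_card)
    moreover have "card (set xs) \<le> card V" using sp_set[OF that(1)] finV by (rule card_mono[rotated])
    ultimately show ?thesis using card_internal[OF d] that(2) internal_sub[of xs] sp_set[OF that(1)] by auto
  qed
  have cardD: "card (V - I) = card V - k + 1" if "card I = k - 1" "I \<subseteq> V" "Suc k \<le> card V" for I
    using that k1 finV by (simp add: card_Diff_subset finite_subset)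
  have ub: "\<exists>ys. shortest_path V E p ys q \<and> length ys = Suc k \<and> X \<subseteq> V - internal ys
              \<and> card (V - internal ys) = card V - k + 1"
    if tX: "total_mutual_visibility_set V E X" for X
  proof -
    obtain ys where ys: "shortest_path V E p ys q" "internal ys \<inter> X = {}"
      using tX pq unfolding total_mutual_visibility_set_def X_visible_def by blast
    have l: "length ys = Suc k" using ys pq by (simp add: shortest_path_def)
    have "X \<subseteq> V - internal ys" using tX ys(2) by (auto simp: total_mutual_visibility_set_def)
    then show ?thesis using ys(1) l cardD sp_k[OF ys(1) l] by blast
  qed
  have tmv_fin: "finite X" if "total_mutual_visibility_set V E X" for X
    using that finV by (auto simp: total_mutual_visibility_set_def intro: finite_subset)
  define M where "M = {card X | X. total_mutual_visibility_set V E X}"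
  have Mfin: "finite M"
  proof -
    have "M \<subseteq> card ` Pow V" unfolding M_def total_mutual_visibility_set_def by auto
    then show ?thesis using finV finite_subset by blast
  qed
  have "total_mutual_visibility_set V E {}"
    unfolding total_mutual_visibility_set_def X_visible_def using sp_exists[OF cg] by auto
  then have Mne: "M \<noteq> {}" unfolding M_def by blast
  have muM: "mu_t V E \<in> M" unfolding mu_t_def M_def[symmetric] using Max_in[OF Mfin Mne] .
  have Mle: "m \<le> card V - k + 1" if mM: "m \<in> M" for m
  proof -
    obtain X where X: "m = card X" "total_mutual_visibility_set V E X" using mM M_def by blast
    obtain ys where "X \<subseteq> V - internal ys" "card (V - internal ys) = card V - k + 1"
      using ub[OF X(2)] by blast
    then show ?thesis using X finV by (metis card_mono finite_Diff)
  qed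
  have ge: "m \<le> mu_t V E" if "m \<in> M" for m
    unfolding mu_t_def M_def[symmetric] using Max_ge[OF Mfin that] .
  show ?thesis unfolding k_def[symmetric]
  proof
    assume "mu_t V E = card V - k + 1"
    then obtain X where X: "card X = card V - k + 1" "total_mutual_visibility_set V E X"
      using muM M_def by auto
    obtain ys where ys: "shortest_path V E p ys q" "length ys = Suc k" "X \<subseteq> V - internal ys"
      "card (V - internal ys) = card V - k + 1" using ub[OF X(2)] by blast
    have XE: "X = V - internal ys" using card_subset_eq[OF _ ys(3)] finV X(1) ys(4) by simp
    have hl: "hd ys = p" "last ys = q" using ys(1) by (auto simp: shortest_path_def walk_betw_def)
    have "\<forall>u\<in>V. \<forall>v\<in>V. \<exists>zs. shortest_path V E u zs v \<and> internal zs \<subseteq> internal ys"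
    proof (intro ballI)
      fix u v assume uv: "u \<in> V" "v \<in> V"
      obtain zs where zs: "shortest_path V E u zs v" "internal zs \<inter> X = {}"
        using X(2) uv unfolding total_mutual_visibility_set_def X_visible_def by blast
      have "internal zs \<subseteq> V" using sp_set[OF zs(1)] internal_sub[of zs] by (rule order_trans[rotated])
      then have "internal zs \<subseteq> internal ys" using zs(2) XE by blast
      then show "\<exists>zs. shortest_path V E u zs v \<and> internal zs \<subseteq> internal ys" using zs(1) by blast
    qed
    moreover have "shortest_path V E (hd ys) ys (last ys)" using ys(1) hl by simp
    ultimately show "\<exists>xs. shortest_path V E (hd xs) xs (last xs) \<and> length xs = Suc k \<and>
       (\<forall>u\<in>V. \<forall>v\<in>V. \<exists>ys. shortest_path V E u ys v \<and> internal ys \<subseteq> internal xs)"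
      using ys(2) by blast
  next
    assume "\<exists>xs. shortest_path V E (hd xs) xs (last xs) \<and> length xs = Suc k \<and>
       (\<forall>u\<in>V. \<forall>v\<in>V. \<exists>ys. shortest_path V E u ys v \<and> internal ys \<subseteq> internal xs)"
    then obtain xs where xs: "shortest_path V E (hd xs) xs (last xs)" "length xs = Suc k"
      "\<forall>u\<in>V. \<forall>v\<in>V. \<exists>ys. shortest_path V E u ys v \<and> internal ys \<subseteq> internal xs" by blast
    have c: "card (V - internal xs) = card V - k + 1" using sp_k[OF xs(1,2)] cardD by blast
    have "total_mutual_visibility_set V E (V - internal xs)"
      unfolding total_mutual_visibility_set_def X_visible_def
    proof (intro conjI ballI)
      fix u v assume "u \<in> V" "v \<in> V"
      then obtain ys where "shortest_path V E u ys v" "internal ys \<subseteq> internal xs" using xs(3) by blast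
      then show "\<exists>ys. shortest_path V E u ys v \<and> internal ys \<inter> (V - internal xs) = {}" by blast
    qed auto
    then have "card V - k + 1 \<in> M" using c M_def by auto
    then show "mu_t V E = card V - k + 1" using ge Mle muM by (meson le_antisym)
  qed
qed

end
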